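(* Let $\mathbb X,\mathbb Y$ be Euclidean spaces, $\varphi\colon\mathbb X\to\mathbb R$ locally Lipschitz, $\Phi\colon\mathbb X\rightrightarrows\mathbb Y$ with closed graph, $\bar y\in\operatorname{Im}\Phi$, and consider (P): $\min\{\varphi(x)\mid\bar y\in\Phi(x)\}$. Let $\bar x$ be feasible for (P), $\gamma_0\geq1$, $\gamma\geq1$, and $u\in\mathbb S_{\mathbb X}$. Then $u$ is critical of order $(\gamma_0,\gamma)$ for (P) at $\bar x$ if and only if there exist sequences $u_k\to u$ and $t_k\downarrow 0$ such that $$\frac{\operatorname{dist}(\varphi(\bar x),M_0(\bar x+t_ku_k))}{(t_k\|u_k\|)^{\gamma_0}}\to0,\qquad \frac{\operatorname{dist}(\bar y,\Phi(\bar x+t_ku_k))}{(t_k\|u_k\|)^{\gamma}}\to0,$$ where $M_0(x):=\varphi(x)+\mathbb R_+$. Moreover, if $\gamma_0=\gamma$, this is further equivalent to $u\in\ker D_\gamma M(\bar x,(\varphi(\bar x),\bar y))$ for the mapping $M\colon\mathbb X\rightrightarrows\mathbb R\times\mathbb Y$, $M(x):=M_0(x)\times\Phi(x)$.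
   Context: $u\in\mathbb X$ is critical of order $(\gamma_0,\gamma)$ for (P) at $\bar x$ if there are $u_k\to u$, $\alpha_k\to0$ in $\mathbb R$, $v_k\to0$ in $\mathbb Y$, $t_k\downarrow0$ with $(\bar x+t_ku_k,\varphi(\bar x)+(t_k\|u_k\|)^{\gamma_0}\alpha_k)\in\operatorname{epi}\varphi$ and $(\bar x+t_ku_k,\bar y+(t_k\|u_k\|)^\gamma v_k)\in\operatorname{gph}\Phi$ for all $k$. For a mapping $M$ with closed graph and $(\bar x,\bar z)\in\operatorname{gph}M$, the graphical pseudo-derivative of order $\gamma$, $D_\gamma M(\bar x,\bar z)$, assigns to $u$ all $w$ such that there are $u_k\to u$, $w_k\to w$, $t_k\downarrow0$ with $(\bar x+t_ku_k,\bar z+(t_k\|u_k\|)^\gamma w_k)\in\operatorname{gph}M$; $\ker D_\gamma M(\bar x,\bar z)=\{u\mid 0\in D_\gamma M(\bar x,\bar z)(u)\}$. $\mathbb S_{\mathbb X}$ is the unit sphere. *)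

theory Defs
  imports "HOL-Analysis.Analysis"
begin

definition loc_lipschitz :: "('a::metric_space \<Rightarrow> real) \<Rightarrow> bool" where
  "loc_lipschitz f \<longleftrightarrow> (\<forall>x. \<exists>e>0. \<exists>L. L-lipschitz_on (ball x e) f)"

definition gph :: "('a \<Rightarrow> 'b set) \<Rightarrow> ('a \<times> 'b) set" where
  "gph F = {(x, y). y \<in> F x}"

definition epi :: "('a \<Rightarrow> real) \<Rightarrow> ('a \<times> real) set" where
  "epi f = {(x, r). f x \<le> r}"

definition M0 :: "('a \<Rightarrow> real) \<Rightarrow> 'a \<Rightarrow> real set" where
  "M0 f x = {f x + r | r. r \<ge> 0}"

definition Mmap :: "('a \<Rightarrow> real) \<Rightarrow> ('a \<Rightarrow> 'b set) \<Rightarrow> 'a \<Rightarrow> (real \<times> 'b) set" where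
  "Mmap f F x = M0 f x \<times> F x"

definition critical ::
  "('a::real_normed_vector \<Rightarrow> real) \<Rightarrow> ('a \<Rightarrow> 'b::real_normed_vector set) \<Rightarrow> 'a \<Rightarrow> 'b
     \<Rightarrow> real \<Rightarrow> real \<Rightarrow> 'a \<Rightarrow> bool" where
  "critical f F xb yb g0 g u \<longleftrightarrow>
     (\<exists>uk ak vk t. uk \<longlonglongrightarrow> u \<and> ak \<longlonglongrightarrow> 0 \<and> vk \<longlonglongrightarrow> 0 \<and>
        (\<forall>k. t k > 0) \<and> t \<longlonglongrightarrow> 0 \<and>
        (\<forall>k. (xb + t k *\<^sub>R uk k, f xb + (t k * norm (uk k)) powr g0 * ak k) \<in> epi f) \<and>
        (\<forall>k. (xb + t k *\<^sub>R uk k, yb + (t k * norm (uk k)) powr g *\<^sub>R vk k) \<in> gph F))"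

definition pseudo_deriv ::
  "real \<Rightarrow> ('a::real_normed_vector \<Rightarrow> 'c::real_normed_vector set) \<Rightarrow> 'a \<Rightarrow> 'c \<Rightarrow> 'a \<Rightarrow> 'c set" where
  "pseudo_deriv g M xb zb u =
     {w. \<exists>uk wk t. uk \<longlonglongrightarrow> u \<and> wk \<longlonglongrightarrow> w \<and> (\<forall>k. t k > 0) \<and> t \<longlonglongrightarrow> 0 \<and>
        (\<forall>k. (xb + t k *\<^sub>R uk k, zb + (t k * norm (uk k)) powr g *\<^sub>R wk k) \<in> gph M)}"

definition pseudo_deriv_ker ::
  "real \<Rightarrow> ('a::real_normed_vector \<Rightarrow> 'c::real_normed_vector set) \<Rightarrow> 'a \<Rightarrow> 'c \<Rightarrow> 'a set" where
  "pseudo_deriv_ker g M xb zb = {u. 0 \<in> pseudo_deriv g M xb zb u}"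

end

theory Submission
  imports Defs
begin

lemma M0_eq: "M0 f x = {f x..}"
  unfolding M0_def by (auto intro: exI[of _ "_ - f x"])

lemma infdist_M0_le: "infdist a (M0 f x) \<le> max 0 (f x - a)"
proof -
  have "max (f x) a \<in> M0 f x" by (simp add: M0_eq)
  hence "infdist a (M0 f x) \<le> dist a (max (f x) a)" by (rule infdist_le)
  also have "\<dots> = max 0 (f x - a)" by (auto simp: dist_real_def max_def)
  finally show ?thesis .
qed

lemma M0_bound: "f x \<le> a + infdist a (M0 f x)"
proof -
  have "closed (M0 f x)" "M0 f x \<noteq> {}" by (auto simp: M0_eq)
  then obtain z where "z \<in> M0 f x" "infdist a (M0 f x) = dist a z"
    using infdist_attains_inf by blast
  then show ?thesis by (auto simp: M0_eq dist_real_def)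
qed

lemma part1_fwd:
  fixes f :: "'a::euclidean_space \<Rightarrow> real"
    and F :: "'a \<Rightarrow> 'b::euclidean_space set"
  assumes "critical f F xb yb g0 g u"
  shows "\<exists>uk t. uk \<longlonglongrightarrow> u \<and> (\<forall>k. t k > 0) \<and> t \<longlonglongrightarrow> 0 \<and>
              (\<lambda>k. infdist (f xb) (M0 f (xb + t k *\<^sub>R uk k)) / (t k * norm (uk k)) powr g0)
                \<longlonglongrightarrow> 0 \<and>
              (\<forall>\<^sub>F k in sequentially. F (xb + t k *\<^sub>R uk k) \<noteq> {}) \<and>
              (\<lambda>k. infdist yb (F (xb + t k *\<^sub>R uk k)) / (t k * norm (uk k)) powr g)
                \<longlonglongrightarrow> 0"
proof -
  obtain uk ak vk t where uk: "uk \<longlonglongrightarrow> u" and ak: "ak \<longlonglongrightarrow> 0" and vk: "vk \<longlonglongrightarrow> 0"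
    and tp: "\<forall>k. t k > 0" and t0: "t \<longlonglongrightarrow> 0"
    and ep: "\<forall>k. (xb + t k *\<^sub>R uk k, f xb + (t k * norm (uk k)) powr g0 * ak k) \<in> epi f"
    and gp: "\<forall>k. (xb + t k *\<^sub>R uk k, yb + (t k * norm (uk k)) powr g *\<^sub>R vk k) \<in> gph F"
    using assms unfolding critical_def by blast
  define x where "x k = xb + t k *\<^sub>R uk k" for k
  define s where "s k = t k * norm (uk k)" for k
  have s0: "s k \<ge> 0" for k using tp by (simp add: s_def less_imp_le)
  have A: "norm (infdist (f xb) (M0 f (x k)) / s k powr g0) \<le> norm (ak k)" for k
  proof (cases "s k = 0")
    case True then show ?thesis by simp
  next
    case False
    hence sp: "s k powr g0 > 0" using s0 by simp
    have le: "f (x k) \<le> f xb + s k powr g0 * ak k" using ep by (simp add: epi_def x_def s_def)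
    have "infdist (f xb) (M0 f (x k)) \<le> max 0 (f (x k) - f xb)" by (rule infdist_M0_le)
    also have "\<dots> \<le> s k powr g0 * \<bar>ak k\<bar>"
    proof -
      have "s k powr g0 * ak k \<le> s k powr g0 * \<bar>ak k\<bar>"
        using sp by (intro mult_left_mono) auto
      moreover have "0 \<le> s k powr g0 * \<bar>ak k\<bar>" using sp by simp
      ultimately show ?thesis using le by linarith
    qed
    finally have "infdist (f xb) (M0 f (x k)) \<le> s k powr g0 * \<bar>ak k\<bar>" .
    then have "infdist (f xb) (M0 f (x k)) / s k powr g0 \<le> \<bar>ak k\<bar>"
      using sp by (simp add: pos_divide_le_eq mult.commute)
    then show ?thesis using sp infdist_nonneg[of "f xb" "M0 f (x k)"] by simp
  qed
  have B: "norm (infdist yb (F (x k)) / s k powr g) \<le> norm (vk k)" for k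
  proof (cases "s k = 0")
    case True then show ?thesis by simp
  next
    case False
    hence sp: "s k powr g > 0" using s0 by simp
    have mem: "yb + s k powr g *\<^sub>R vk k \<in> F (x k)" using gp by (simp add: gph_def x_def s_def)
    have "infdist yb (F (x k)) \<le> dist yb (yb + s k powr g *\<^sub>R vk k)" using mem by (rule infdist_le)
    also have "\<dots> = s k powr g * norm (vk k)" using sp by (simp add: dist_norm)
    finally have "infdist yb (F (x k)) \<le> s k powr g * norm (vk k)" .
    then have "infdist yb (F (x k)) / s k powr g \<le> norm (vk k)"
      using sp by (simp add: pos_divide_le_eq mult.commute)
    then show ?thesis using sp infdist_nonneg[of yb "F (x k)"] by simp
  qed
  have L1: "(\<lambda>k. infdist (f xb) (M0 f (x k)) / s k powr g0) \<longlonglongrightarrow> 0"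
    apply (rule Lim_null_comparison[where g="\<lambda>k. norm (ak k)"])
    using A apply simp
    using tendsto_norm_zero[OF ak] .
  have L2: "(\<lambda>k. infdist yb (F (x k)) / s k powr g) \<longlonglongrightarrow> 0"
    apply (rule Lim_null_comparison[where g="\<lambda>k. norm (vk k)"])
    using B apply simp
    using tendsto_norm_zero[OF vk] .
  have NE: "\<forall>\<^sub>F k in sequentially. F (x k) \<noteq> {}"
  proof (rule always_eventually, rule allI)
    fix k show "F (x k) \<noteq> {}" using gp[rule_format, of k] by (auto simp: gph_def x_def)
  qed
  show ?thesis
    apply (rule exI[of _ uk], rule exI[of _ t])
    using uk tp t0 L1 L2 NE unfolding x_def s_def by (intro conjI)
qed

lemma part1_bwd:
  fixes f :: "'a::euclidean_space \<Rightarrow> real"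
    and F :: "'a \<Rightarrow> 'b::euclidean_space set"
  assumes cl: "closed (gph F)" and nu: "norm u = 1"
  and "\<exists>uk t. uk \<longlonglongrightarrow> u \<and> (\<forall>k. t k > 0) \<and> t \<longlonglongrightarrow> 0 \<and>
              (\<lambda>k. infdist (f xb) (M0 f (xb + t k *\<^sub>R uk k)) / (t k * norm (uk k)) powr g0)
                \<longlonglongrightarrow> 0 \<and>
              (\<forall>\<^sub>F k in sequentially. F (xb + t k *\<^sub>R uk k) \<noteq> {}) \<and>
              (\<lambda>k. infdist yb (F (xb + t k *\<^sub>R uk k)) / (t k * norm (uk k)) powr g)
                \<longlonglongrightarrow> 0"
  shows "critical f F xb yb g0 g u"
proof -
  obtain uk t where uk: "uk \<longlonglongrightarrow> u" and tp: "\<forall>k. t k > 0" and t0: "t \<longlonglongrightarrow> 0"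
    and L1: "(\<lambda>k. infdist (f xb) (M0 f (xb + t k *\<^sub>R uk k)) / (t k * norm (uk k)) powr g0) \<longlonglongrightarrow> 0"
    and NE: "\<forall>\<^sub>F k in sequentially. F (xb + t k *\<^sub>R uk k) \<noteq> {}"
    and L2: "(\<lambda>k. infdist yb (F (xb + t k *\<^sub>R uk k)) / (t k * norm (uk k)) powr g) \<longlonglongrightarrow> 0"
    using assms(3) by blast
  have "u \<noteq> 0" using nu by auto
  hence "\<forall>\<^sub>F k in sequentially. uk k \<noteq> 0" using tendsto_imp_eventually_ne[OF uk] by blast
  with NE have "\<forall>\<^sub>F k in sequentially. uk k \<noteq> 0 \<and> F (xb + t k *\<^sub>R uk k) \<noteq> {}"
    by (simp add: eventually_conj)
  then obtain N where N: "\<And>k. k \<ge> N \<Longrightarrow> uk k \<noteq> 0 \<and> F (xb + t k *\<^sub>R uk k) \<noteq> {}"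
    unfolding eventually_sequentially by blast
  define U where "U k = uk (k + N)" for k
  define T where "T k = t (k + N)" for k
  define x where "x k = xb + T k *\<^sub>R U k" for k
  define s where "s k = T k * norm (U k)" for k
  have sp: "s k > 0" for k using N[of "k+N"] tp by (simp add: s_def T_def U_def)
  have Fne: "F (x k) \<noteq> {}" for k using N[of "k+N"] by (simp add: x_def T_def U_def)
  have Fcl: "closed (F y)" for y
  proof -
    have "F y = (\<lambda>z. (y, z)) -` gph F" by (auto simp: gph_def)
    then show ?thesis using continuous_closed_vimage[OF cl, of "\<lambda>z. (y, z)"] by simp
  qed
  have "\<forall>k. \<exists>z\<in>F (x k). infdist yb (F (x k)) = dist yb z"
    using infdist_attains_inf[OF Fcl Fne] by metis
  then obtain Y where Y: "\<And>k. Y k \<in> F (x k)" "\<And>k. infdist yb (F (x k)) = dist yb (Y k)"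
    by metis
  define ak where "ak k = infdist (f xb) (M0 f (x k)) / s k powr g0" for k
  define vk where "vk k = (Y k - yb) /\<^sub>R s k powr g" for k
  have U: "U \<longlonglongrightarrow> u" unfolding U_def using LIMSEQ_ignore_initial_segment[OF uk] .
  have T: "T \<longlonglongrightarrow> 0" unfolding T_def using LIMSEQ_ignore_initial_segment[OF t0] .
  have Tp: "\<forall>k. T k > 0" using tp by (simp add: T_def)
  have A: "ak \<longlonglongrightarrow> 0" unfolding ak_def x_def s_def T_def U_def
    using LIMSEQ_ignore_initial_segment[OF L1, of N] .
  have L2': "(\<lambda>k. infdist yb (F (x k)) / s k powr g) \<longlonglongrightarrow> 0" unfolding x_def s_def T_def U_def
    using LIMSEQ_ignore_initial_segment[OF L2, of N] .
  have nv: "norm (vk k) = infdist yb (F (x k)) / s k powr g" for k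
    using sp[of k] by (simp add: vk_def Y dist_norm norm_minus_commute divide_inverse mult.commute)
  have V: "vk \<longlonglongrightarrow> 0"
    by (rule tendsto_norm_zero_cancel) (simp add: nv L2')
  have E: "(xb + T k *\<^sub>R U k, f xb + (T k * norm (U k)) powr g0 * ak k) \<in> epi f" for k
    using M0_bound[of f "x k" "f xb"] sp[of k]
    by (simp add: epi_def ak_def x_def[symmetric] s_def[symmetric])
  have G: "(xb + T k *\<^sub>R U k, yb + (T k * norm (U k)) powr g *\<^sub>R vk k) \<in> gph F" for k
    using Y(1)[of k] sp[of k]
    by (simp add: gph_def vk_def x_def[symmetric] s_def[symmetric])
  show ?thesis unfolding critical_def
    apply (rule exI[of _ U], rule exI[of _ ak], rule exI[of _ vk], rule exI[of _ T])
    using U A V Tp T E G by simp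
qed

lemma part2:
  fixes f :: "'a::euclidean_space \<Rightarrow> real"
    and F :: "'a \<Rightarrow> 'b::euclidean_space set"
  assumes eq: "g0 = g"
  shows "critical f F xb yb g0 g u \<longleftrightarrow> u \<in> pseudo_deriv_ker g (Mmap f F) xb (f xb, yb)"
proof -
  have mem: "(x, (a + c * p, b + c *\<^sub>R q)) \<in> gph (Mmap f F) \<longleftrightarrow>
      (x, a + c * p) \<in> epi f \<and> (x, b + c *\<^sub>R q) \<in> gph F" for x a b c p q
    by (auto simp: gph_def epi_def Mmap_def M0_def intro: exI[of _ "_ - f x"])
  show ?thesis
  proof
    assume "critical f F xb yb g0 g u"
    then obtain uk ak vk t where uk: "uk \<longlonglongrightarrow> u" and ak: "ak \<longlonglongrightarrow> 0" and vk: "vk \<longlonglongrightarrow> 0"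
      and tp: "\<forall>k. t k > 0" and t0: "t \<longlonglongrightarrow> 0"
      and ep: "\<forall>k. (xb + t k *\<^sub>R uk k, f xb + (t k * norm (uk k)) powr g0 * ak k) \<in> epi f"
      and gp: "\<forall>k. (xb + t k *\<^sub>R uk k, yb + (t k * norm (uk k)) powr g *\<^sub>R vk k) \<in> gph F"
      unfolding critical_def by blast
    have W: "(\<lambda>k. (ak k, vk k)) \<longlonglongrightarrow> (0, 0)" using tendsto_Pair[OF ak vk] .
    show "u \<in> pseudo_deriv_ker g (Mmap f F) xb (f xb, yb)"
      unfolding pseudo_deriv_ker_def pseudo_deriv_def mem_Collect_eq
      apply (rule exI[of _ uk], rule exI[of _ "\<lambda>k. (ak k, vk k)"], rule exI[of _ t])
      using uk W tp t0 ep gp eq by (simp add: mem zero_prod_def)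
  next
    assume "u \<in> pseudo_deriv_ker g (Mmap f F) xb (f xb, yb)"
    then obtain uk wk t where uk: "uk \<longlonglongrightarrow> u" and wk: "wk \<longlonglongrightarrow> 0"
      and tp: "\<forall>k. t k > 0" and t0: "t \<longlonglongrightarrow> 0"
      and gp: "\<forall>k. (xb + t k *\<^sub>R uk k, (f xb, yb) + (t k * norm (uk k)) powr g *\<^sub>R wk k) \<in> gph (Mmap f F)"
      unfolding pseudo_deriv_ker_def pseudo_deriv_def by blast
    have a: "(\<lambda>k. fst (wk k)) \<longlonglongrightarrow> 0" using tendsto_fst[OF wk] by simp
    have b: "(\<lambda>k. snd (wk k)) \<longlonglongrightarrow> 0" using tendsto_snd[OF wk] by simp
    have gp': "(xb + t k *\<^sub>R uk k, f xb + (t k * norm (uk k)) powr g * fst (wk k)) \<in> epi f \<and>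
       (xb + t k *\<^sub>R uk k, yb + (t k * norm (uk k)) powr g *\<^sub>R snd (wk k)) \<in> gph F" for k
    proof -
      have e: "(f xb, yb) + c *\<^sub>R wk k = (f xb + c * fst (wk k), yb + c *\<^sub>R snd (wk k))" for c
        by (simp add: prod_eq_iff)
      show ?thesis using gp[rule_format, of k] by (simp only: e mem)
    qed
    show "critical f F xb yb g0 g u" unfolding critical_def
      apply (rule exI[of _ uk], rule exI[of _ "\<lambda>k. fst (wk k)"], rule exI[of _ "\<lambda>k. snd (wk k)"], rule exI[of _ t])
      using uk a b tp t0 gp' eq by simp
  qed
qed

theorem proposition4p5:
  fixes f :: "'a::euclidean_space \<Rightarrow> real"
    and F :: "'a \<Rightarrow> 'b::euclidean_space set"
    and xb u :: 'a and yb :: 'b and g0 g :: real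
  assumes "loc_lipschitz f"
    and "closed (gph F)"
    and "yb \<in> (\<Union>x. F x)"
    and "yb \<in> F xb"
    and "g0 \<ge> 1" and "g \<ge> 1"
    and "norm u = 1"
  shows "(critical f F xb yb g0 g u \<longleftrightarrow>
           (\<exists>uk t. uk \<longlonglongrightarrow> u \<and> (\<forall>k. t k > 0) \<and> t \<longlonglongrightarrow> 0 \<and>
              (\<lambda>k. infdist (f xb) (M0 f (xb + t k *\<^sub>R uk k)) / (t k * norm (uk k)) powr g0)
                \<longlonglongrightarrow> 0 \<and>
              (\<forall>\<^sub>F k in sequentially. F (xb + t k *\<^sub>R uk k) \<noteq> {}) \<and>
              (\<lambda>k. infdist yb (F (xb + t k *\<^sub>R uk k)) / (t k * norm (uk k)) powr g)
                \<longlonglongrightarrow> 0))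
       \<and> (g0 = g \<longrightarrow>
           (critical f F xb yb g0 g u \<longleftrightarrow> u \<in> pseudo_deriv_ker g (Mmap f F) xb (f xb, yb)))"
  apply (intro conjI impI)
  subgoal
    apply (rule iffI)
     apply (erule part1_fwd)
    apply (erule part1_bwd[OF assms(2) assms(7)])
    done
  subgoal by (erule part2)
  done

end
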